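(* For every $n\ge1$ and every $r\in\mathbb{N}\cup\{0\}$, every polynomial function $C_0\times\cdots\times C_r\to\mathbb{R}$ that is invariant under the natural action of $\mathrm{Gl}_n$ is constant.
   Context: $V=T_xX$ is an $n$-dimensional real vector space and $\mathrm{Gl}_n=\mathrm{Gl}(V)$. For $m\ge0$, $C_m\subseteq V\otimes(V^* )^{\otimes(m+2)}$ is the space of $(1,m+2)$-tensors $T^l_{ijk_1\dots k_m}$ symmetric in $k_1,\dots,k_m$ and whose symmetrization over all $m+2$ covariant indices vanishes; $\mathrm{Gl}_n$ acts on it by the standard tensorial action. *)

theory Defs
  imports "HOL-Analysis.Analysis" "HOL-Combinatorics.Permutations"
begin

text \<open>V = real^'n (n = CARD('n) \<ge> 1). A (1,m+2)-tensor is a function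
  T :: 'n \<Rightarrow> 'n list \<Rightarrow> real, T l [i,j,k1,...,km] = T^l_{ijk1...km},
  required to vanish on index lists of length other than m+2.\<close>

type_synonym 'n tensor = "'n \<Rightarrow> 'n list \<Rightarrow> real"

definition C_space :: "nat \<Rightarrow> ('n::finite) tensor set" where
  "C_space m = {T.
     (\<forall>l xs. length xs \<noteq> m + 2 \<longrightarrow> T l xs = 0) \<and>
     (\<forall>l i j ks \<sigma>. length ks = m \<and> \<sigma> permutes {..<m} \<longrightarrow>
        T l (i # j # permute_list \<sigma> ks) = T l (i # j # ks)) \<and>
     (\<forall>l xs. length xs = m + 2 \<longrightarrow>
        (\<Sum>\<sigma>\<in>{\<sigma>. \<sigma> permutes {..<m + 2}}. T l (permute_list \<sigma> xs)) = 0)}"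

definition tensor_act :: "nat \<Rightarrow> real^'n^'n \<Rightarrow> ('n::finite) tensor \<Rightarrow> 'n tensor" where
  "tensor_act m g T = (\<lambda>l xs.
     if length xs = m + 2 then
       (\<Sum>a\<in>UNIV. \<Sum>ys\<in>{ys. length ys = m + 2}.
          g $ l $ a * (\<Prod>p<m + 2. matrix_inv g $ (ys ! p) $ (xs ! p)) * T a ys)
     else 0)"

definition C_prod :: "nat \<Rightarrow> (nat \<Rightarrow> ('n::finite) tensor) set" where
  "C_prod r = {Ts. (\<forall>m\<le>r. Ts m \<in> C_space m) \<and> (\<forall>m>r. Ts m = (\<lambda>_ _. 0))}"

inductive coord_poly :: "nat \<Rightarrow> ((nat \<Rightarrow> ('n::finite) tensor) \<Rightarrow> real) \<Rightarrow> bool" for r where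
  const: "coord_poly r (\<lambda>_. c)"
| coord: "m \<le> r \<Longrightarrow> length xs = m + 2 \<Longrightarrow> coord_poly r (\<lambda>Ts. Ts m l xs)"
| add: "coord_poly r P \<Longrightarrow> coord_poly r Q \<Longrightarrow> coord_poly r (\<lambda>Ts. P Ts + Q Ts)"
| mult: "coord_poly r P \<Longrightarrow> coord_poly r Q \<Longrightarrow> coord_poly r (\<lambda>Ts. P Ts * Q Ts)"

definition polynomial_on_C_prod :: "nat \<Rightarrow> ((nat \<Rightarrow> ('n::finite) tensor) \<Rightarrow> real) \<Rightarrow> bool" where
  "polynomial_on_C_prod r F \<longleftrightarrow> (\<exists>P. coord_poly r P \<and> (\<forall>Ts\<in>C_prod r. F Ts = P Ts))"

definition Gl_invariant :: "nat \<Rightarrow> ((nat \<Rightarrow> ('n::finite) tensor) \<Rightarrow> real) \<Rightarrow> bool" where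
  "Gl_invariant r F \<longleftrightarrow> (\<forall>g::real^'n^'n. invertible g \<longrightarrow>
      (\<forall>Ts\<in>C_prod r. F (\<lambda>m. tensor_act m g (Ts m)) = F Ts))"

end

theory Submission
  imports Defs
begin

lemma mat_mult_left: "(mat t :: real^'n^'n) ** X = t *\<^sub>R X"
proof -
  have "(\<Sum>k\<in>UNIV. (if i = k then t else 0) * X $ k $ j) = t * X $ i $ j" for i j
  proof -
    have "(if i = k then t else 0) * X $ k $ j = (if k = i then t * X $ k $ j else 0)" for k by simp
    hence "(\<Sum>k\<in>UNIV. (if i = k then t else 0) * X $ k $ j) = (\<Sum>k\<in>UNIV. if k = i then t * X $ k $ j else 0)"
      by presburger
    thus ?thesis by simp
  qed
  thus ?thesis by (simp add: vec_eq_iff matrix_matrix_mult_def mat_def)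
qed

lemma mat_nth: "(mat t :: real^'n^'n) $ i $ j = (if i = j then t else 0)"
  by (simp add: mat_def)

lemma invertible_mat: "t \<noteq> 0 \<Longrightarrow> invertible (mat t :: real^'n^'n)"
  unfolding invertible_def
  by (rule exI[of _ "mat (1/t)"]) (simp add: mat_mult_left vec_eq_iff mat_nth)

lemma matrix_inv_mat: assumes "t \<noteq> 0" shows "matrix_inv (mat t :: real^'n^'n) = mat (1/t)"
proof -
  have "mat t ** matrix_inv (mat t :: real^'n^'n) = mat 1"
    using invertible_mat[OF assms, where 'n='n] unfolding invertible_def matrix_inv_def
    by (metis (mono_tags, lifting) someI_ex)
  hence "t *\<^sub>R matrix_inv (mat t :: real^'n^'n) = mat 1" by (simp add: mat_mult_left)
  hence "(1/t) *\<^sub>R (t *\<^sub>R matrix_inv (mat t :: real^'n^'n)) = (1/t) *\<^sub>R mat 1" by simp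
  thus ?thesis using assms by (simp add: vec_eq_iff mat_nth)
qed

lemma act_mat:
  assumes t: "t \<noteq> 0" and T: "T \<in> C_space m"
  shows "tensor_act m (mat t :: real^'n^'n) (T :: 'n::finite tensor) = (\<lambda>l xs. (1/t)^(m+1) * T l xs)"
proof (intro ext)
  fix l and xs :: "'n list"
  show "tensor_act m (mat t) T l xs = (1/t)^(m+1) * T l xs"
  proof (cases "length xs = m + 2")
    case False
    thus ?thesis using T by (simp add: tensor_act_def C_space_def)
  next
    case True
    have fin: "finite {ys :: 'n list. length ys = m + 2}"
      using finite_lists_length_eq[of "UNIV :: 'n set" "m+2"] by simp
    have inner: "(\<Sum>ys\<in>{ys. length ys = m + 2}. mat t $ l $ a * (\<Prod>p<m + 2. matrix_inv (mat t) $ (ys ! p) $ (xs ! p)) * T a ys)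
       = mat t $ l $ a * (\<Prod>p<m + 2. matrix_inv (mat t :: real^'n^'n) $ (xs ! p) $ (xs ! p)) * T a xs" for a
    proof -
      have xsin: "xs \<in> {ys. length ys = m + 2}" using True by simp
      have z: "mat t $ l $ a * (\<Prod>p<m + 2. matrix_inv (mat t :: real^'n^'n) $ (ys ! p) $ (xs ! p)) * T a ys = 0"
        if ys: "ys \<in> {ys. length ys = m + 2} - {xs}" for ys
      proof -
      from ys obtain p where p: "p < m + 2" "ys ! p \<noteq> xs ! p"
        using True nth_equalityI[of ys xs] by auto
      have "(\<Prod>p<m + 2. matrix_inv (mat t :: real^'n^'n) $ (ys ! p) $ (xs ! p)) = 0"
        using p by (intro prod_zero) (auto simp: matrix_inv_mat[OF t] mat_nth)
      thus ?thesis by simp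
      qed
      let ?G = "\<lambda>ys. mat t $ l $ a * (\<Prod>p<m + 2. matrix_inv (mat t :: real^'n^'n) $ (ys ! p) $ (xs ! p)) * T a ys"
      have "sum ?G {ys. length ys = m + 2} = ?G xs + sum ?G ({ys. length ys = m + 2} - {xs})"
        by (rule sum.remove[OF fin xsin])
      moreover have "sum ?G ({ys. length ys = m + 2} - {xs}) = 0"
        by (rule sum.neutral) (use z in blast)
      ultimately show ?thesis by simp
    qed
    have pr: "(\<Prod>p<m + 2. matrix_inv (mat t :: real^'n^'n) $ (xs ! p) $ (xs ! p)) = (1/t)^(m+2)"
      by (simp add: matrix_inv_mat[OF t] mat_nth)
    have "tensor_act m (mat t) T l xs = (\<Sum>a\<in>UNIV. mat t $ l $ a * (1/t)^(m+2) * T a xs)"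
      using True unfolding tensor_act_def by (simp only: inner pr) simp
    also have "\<dots> = (\<Sum>a\<in>UNIV. if a = l then t * (1/t)^(m+2) * T a xs else 0)"
      by (rule sum.cong) (auto simp: mat_nth)
    also have "\<dots> = t * (1/t)^(m+2) * T l xs" by simp
    also have "\<dots> = (1/t)^(m+1) * T l xs" using t by (simp add: field_simps)
    finally show ?thesis .
  qed
qed

lemma scale_C_space: "T \<in> C_space m \<Longrightarrow> (\<lambda>l xs. c * T l xs) \<in> C_space m"
  unfolding C_space_def by (auto simp: sum_distrib_left[symmetric])

lemma scale_C_prod: "Ts \<in> C_prod r \<Longrightarrow> (\<lambda>m l xs. f m * Ts m l xs) \<in> C_prod r"
  unfolding C_prod_def by (auto intro: scale_C_space)

lemma coord_poly_cont: "coord_poly r P \<Longrightarrow> continuous_on UNIV (\<lambda>s::real. P (\<lambda>m l xs. s^(m+1) * Ts m l xs))"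
  by (induction rule: coord_poly.induct) (auto intro!: continuous_intros)


theorem mainTheorem8:
  fixes r :: nat and F :: "(nat \<Rightarrow> ('n::finite) tensor) \<Rightarrow> real"
  assumes "polynomial_on_C_prod r F"
    and "Gl_invariant r F"
  shows "\<exists>c. \<forall>Ts\<in>C_prod r. F Ts = c"
proof -
  obtain P where P: "coord_poly r P" and FP: "\<forall>Ts\<in>C_prod r. F Ts = P Ts"
    using assms(1) unfolding polynomial_on_C_prod_def by blast
  have "F Ts = P (\<lambda>m l xs. 0)" if Ts: "Ts \<in> C_prod r" for Ts
  proof -
    define f where "f = (\<lambda>s::real. P (\<lambda>m l xs. s^(m+1) * Ts m l xs))"
    have eq: "f s = F Ts" if s: "s \<noteq> 0" for s
    proof -
      have inv: "invertible (mat (1/s) :: real^'n^'n)" using s by (simp add: invertible_mat)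
      have act: "(\<lambda>m. tensor_act m (mat (1/s)) (Ts m)) = (\<lambda>m l xs. s^(m+1) * Ts m l xs)"
      proof
        fix m show "tensor_act m (mat (1/s) :: real^'n^'n) (Ts m) = (\<lambda>l xs. s^(m+1) * Ts m l xs)"
        proof (cases "m \<le> r")
          case True
          hence "Ts m \<in> C_space m" using Ts by (simp add: C_prod_def)
          thus ?thesis using s by (simp add: act_mat)
        next
          case False
          hence "Ts m = (\<lambda>_ _. 0)" using Ts by (simp add: C_prod_def)
          thus ?thesis by (intro ext) (simp add: tensor_act_def)
        qed
      qed
      have "F Ts = F (\<lambda>m. tensor_act m (mat (1/s)) (Ts m))"
        using assms(2) inv Ts unfolding Gl_invariant_def by metis
      also have "\<dots> = P (\<lambda>m l xs. s^(m+1) * Ts m l xs)"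
        unfolding act using FP scale_C_prod[OF Ts, of "\<lambda>m. s^(m+1)"] by simp
      finally show ?thesis by (simp add: f_def)
    qed
    have "continuous_on UNIV f" unfolding f_def by (rule coord_poly_cont[OF P])
    hence "(f \<longlongrightarrow> f 0) (at 0)"
      by (simp add: continuous_on_def)
    moreover have "(f \<longlongrightarrow> F Ts) (at 0)"
      by (rule tendsto_eventually) (auto simp: eventually_at_filter eq)
    ultimately have "f 0 = F Ts"
      using tendsto_unique by (metis trivial_limit_at)
    thus ?thesis by (simp add: f_def)
  qed
  thus ?thesis by blast
qed

end
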